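(* Let $\mathcal{M}=(S,P,E,s_{init},L)$ be a CTMC, $\varepsilon,\delta\geq0$, let $R$ be a transitive $(\varepsilon,\delta)$-bisimulation on $\mathcal{M}$ and let $q\geq\max_{s\in S}E(s)$. Then the partition $S/R$ of $S$ into equivalence classes of $R$ is a $q\cdot(e^{\delta}(1+\varepsilon)-1)$-quasi-lumpability.
   Context: A CTMC $(S,P,E,s_{init},L)$: finite $S$, $P\colon S\to\mathrm{Distr}(S)$ (with $P(s,A)=\sum_{a\in A}P(s,a)$), $E\colon S\to\mathbb{R}_{>0}$, initial state, labeling $L\colon S\to2^{AP}$. For $R\subseteq S\times S$, $A\subseteq S$: $R(A)=\{t\mid\exists a\in A:(a,t)\in R\}$. A reflexive symmetric $R$ is an $(\varepsilon,\delta)$-bisimulation if for all $(s,s')\in R$: $L(s)=L(s')$, $|\ln E(s)-\ln E(s')|\leq\delta$, and $P(s,A)\leq P(s',R(A))+\varepsilon$ for all $A\subseteq S$. For $\tau\geq0$, a partition $\Omega=\{\Omega_1,\dots,\Omega_m\}$ of $S$ is a $\tau$-quasi-lumpability if for all $1\leq i,j\leq m$ and all $s,s'\in\Omega_i$: $|P(s,\Omega_j)\cdot E(s)-P(s',\Omega_j)\cdot E(s')|\leq\tau$. *)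

theory Defs
  imports Main "HOL.Real" "HOL.Transcendental"
begin

definition ctmc :: "'a set \<Rightarrow> ('a \<Rightarrow> 'a \<Rightarrow> real) \<Rightarrow> ('a \<Rightarrow> real) \<Rightarrow> 'a \<Rightarrow> ('a \<Rightarrow> 'l set) \<Rightarrow> bool" where
  "ctmc S P E s_init L \<longleftrightarrow>
     finite S \<and> S \<noteq> {} \<and> s_init \<in> S \<and>
     (\<forall>s\<in>S. (\<forall>t\<in>S. P s t \<ge> 0) \<and> (\<Sum>t\<in>S. P s t) = 1) \<and>
     (\<forall>s\<in>S. E s > 0)"

definition Pset :: "('a \<Rightarrow> 'a \<Rightarrow> real) \<Rightarrow> 'a \<Rightarrow> 'a set \<Rightarrow> real" where
  "Pset P s A = (\<Sum>a\<in>A. P s a)"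

definition eps_delta_bisim ::
  "'a set \<Rightarrow> ('a \<Rightarrow> 'a \<Rightarrow> real) \<Rightarrow> ('a \<Rightarrow> real) \<Rightarrow> ('a \<Rightarrow> 'l set) \<Rightarrow> real \<Rightarrow> real \<Rightarrow> ('a \<times> 'a) set \<Rightarrow> bool" where
  "eps_delta_bisim S P E L \<epsilon> \<delta> R \<longleftrightarrow>
     R \<subseteq> S \<times> S \<and> refl_on S R \<and> sym R \<and>
     (\<forall>(s, s') \<in> R. L s = L s' \<and> \<bar>ln (E s) - ln (E s')\<bar> \<le> \<delta> \<and>
        (\<forall>A. A \<subseteq> S \<longrightarrow> Pset P s A \<le> Pset P s' (R `` A) + \<epsilon>))"

definition quasi_lumpability ::
  "'a set \<Rightarrow> ('a \<Rightarrow> 'a \<Rightarrow> real) \<Rightarrow> ('a \<Rightarrow> real) \<Rightarrow> real \<Rightarrow> 'a set set \<Rightarrow> bool" where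
  "quasi_lumpability S P E \<tau> \<Omega> \<longleftrightarrow>
     \<tau> \<ge> 0 \<and>
     \<comment> \<open>\<Omega> is a partition of S\<close>
     \<Union>\<Omega> = S \<and> {} \<notin> \<Omega> \<and>
     (\<forall>A\<in>\<Omega>. \<forall>B\<in>\<Omega>. A \<noteq> B \<longrightarrow> A \<inter> B = {}) \<and>
     (\<forall>\<Omega>i\<in>\<Omega>. \<forall>\<Omega>j\<in>\<Omega>. \<forall>s\<in>\<Omega>i. \<forall>s'\<in>\<Omega>i.
        \<bar>Pset P s \<Omega>j * E s - Pset P s' \<Omega>j * E s'\<bar> \<le> \<tau>)"

end

theory Submission
  imports Defs
begin

lemma key_ineq:
  fixes a x y e d q :: real
  assumes "0 \<le> x" "x \<le> 1" "a \<le> x + e" "0 \<le> a" "0 < y" "y \<le> q" "b \<le> exp d * y" "0 \<le> b"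
    "0 \<le> e" "0 \<le> d"
  shows "a * b - x * y \<le> q * (exp d * (1 + e) - 1)"
proof -
  have ed: "exp d \<ge> 1" using assms by simp
  have "a * b \<le> (x + e) * (exp d * y)" using assms by (intro mult_mono) auto
  hence "a * b - x * y \<le> y * (x * (exp d - 1) + e * exp d)" by (simp add: algebra_simps)
  also have "x * (exp d - 1) + e * exp d \<le> (exp d - 1) + e * exp d"
    using assms ed by (simp add: mult_left_le_one_le)
  hence "y * (x * (exp d - 1) + e * exp d) \<le> y * ((exp d - 1) + e * exp d)"
    using assms by (intro mult_left_mono) auto
  also have "\<dots> \<le> q * ((exp d - 1) + e * exp d)"
    using assms ed by (intro mult_right_mono) auto
  finally show ?thesis by (simp add: algebra_simps)
qed

theorem proposition1:
  fixes S :: "'a set" and P :: "'a \<Rightarrow> 'a \<Rightarrow> real" and E :: "'a \<Rightarrow> real"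
    and s_init :: 'a and L :: "'a \<Rightarrow> 'l set"
    and \<epsilon> \<delta> q :: real and R :: "('a \<times> 'a) set"
  assumes "ctmc S P E s_init L"
    and "\<epsilon> \<ge> 0" and "\<delta> \<ge> 0"
    and "eps_delta_bisim S P E L \<epsilon> \<delta> R"
    and "trans R"
    and "q \<ge> Max (E ` S)"
  shows "quasi_lumpability S P E (q * (exp \<delta> * (1 + \<epsilon>) - 1)) (S // R)"
proof -
  have fin: "finite S" and ne: "S \<noteq> {}" and Pnn: "\<And>s t. s \<in> S \<Longrightarrow> t \<in> S \<Longrightarrow> P s t \<ge> 0"
    and Psum: "\<And>s. s \<in> S \<Longrightarrow> (\<Sum>t\<in>S. P s t) = 1" and Epos: "\<And>s. s \<in> S \<Longrightarrow> E s > 0"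
    using assms(1) unfolding ctmc_def by auto
  have RS: "R \<subseteq> S \<times> S" and rf: "refl_on S R" and sy: "sym R"
    and bis: "\<And>s s'. (s, s') \<in> R \<Longrightarrow> \<bar>ln (E s) - ln (E s')\<bar> \<le> \<delta> \<and>
        (\<forall>A. A \<subseteq> S \<longrightarrow> Pset P s A \<le> Pset P s' (R `` A) + \<epsilon>)"
    using assms(4) unfolding eps_delta_bisim_def by auto
  have eq: "equiv S R" using rf sy assms(5) RS by (simp add: equiv_def)
  have Eq: "\<And>s. s \<in> S \<Longrightarrow> E s \<le> q"
    using assms(6) fin by (meson Max_ge finite_imageI image_eqI order_trans)
  obtain s0 where "s0 \<in> S" using ne by auto
  hence q0: "q > 0" using Eq Epos by (meson less_le_trans)
  have ed: "exp \<delta> \<ge> 1" using assms(3) by simp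
  have tau: "q * (exp \<delta> * (1 + \<epsilon>) - 1) \<ge> 0"
  proof -
    have "exp \<delta> * (1 + \<epsilon>) \<ge> 1 * 1" using ed assms(2) by (intro mult_mono) auto
    thus ?thesis using q0 by simp
  qed
  have PsetD: "\<And>s D. s \<in> S \<Longrightarrow> D \<subseteq> S \<Longrightarrow> 0 \<le> Pset P s D \<and> Pset P s D \<le> 1"
  proof -
    fix s D assume s: "s \<in> S" and D: "D \<subseteq> S"
    have "0 \<le> Pset P s D" unfolding Pset_def using s D Pnn by (intro sum_nonneg) auto
    moreover have "Pset P s D \<le> (\<Sum>t\<in>S. P s t)" unfolding Pset_def
      using s D Pnn fin by (intro sum_mono2) auto
    ultimately show "0 \<le> Pset P s D \<and> Pset P s D \<le> 1" using Psum s by simp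
  qed
  have one: "Pset P s D * E s - Pset P s' D * E s' \<le> q * (exp \<delta> * (1 + \<epsilon>) - 1)"
    if sR: "(s, s') \<in> R" and D: "D \<in> S // R" for s s' D
  proof -
    have s: "s \<in> S" and s': "s' \<in> S" using sR RS by auto
    have DS: "D \<subseteq> S" using D RS unfolding quotient_def by blast
    have RD: "R `` D = D"
    proof
      show "R `` D \<subseteq> D"
        using D assms(5) unfolding quotient_def trans_def by blast
      show "D \<subseteq> R `` D" using DS rf unfolding refl_on_def by blast
    qed
    have b: "\<bar>ln (E s) - ln (E s')\<bar> \<le> \<delta>" and p: "Pset P s D \<le> Pset P s' D + \<epsilon>"
      using bis[OF sR] DS RD by auto
    have "E s = exp (ln (E s))" using Epos[OF s] by simp
    also have "\<dots> \<le> exp (\<delta> + ln (E s'))" using b by simp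
    also have "\<dots> = exp \<delta> * E s'" using Epos[OF s'] by (simp add: exp_add)
    finally have "E s \<le> exp \<delta> * E s'" .
    thus ?thesis using key_ineq[of "Pset P s' D" "Pset P s D" \<epsilon> "E s'" q "E s" \<delta>]
      PsetD[OF s DS] PsetD[OF s' DS] p Epos[OF s] Epos[OF s'] Eq[OF s'] assms(2,3) by auto
  qed
  show ?thesis unfolding quasi_lumpability_def
  proof (intro conjI ballI impI)
    show "\<Union> (S // R) = S" using eq by (rule Union_quotient)
    show "{} \<notin> S // R" using eq by (meson in_quotient_imp_non_empty)
    show "A \<inter> B = {}" if "A \<in> S // R" "B \<in> S // R" "A \<noteq> B" for A B
      using quotient_disj[OF eq that(1,2)] that(3) by auto
    show "\<bar>Pset P s Oj * E s - Pset P s' Oj * E s'\<bar> \<le> q * (exp \<delta> * (1 + \<epsilon>) - 1)"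
      if "Oi \<in> S // R" "Oj \<in> S // R" "s \<in> Oi" "s' \<in> Oi" for Oi Oj s s'
    proof -
      have "(s, s') \<in> R" using that quotient_eq_iff[OF eq that(1) that(1)] by blast
      moreover hence "(s', s) \<in> R" using sy by (meson symD)
      ultimately show ?thesis using one that(2) by (simp add: abs_le_iff)
    qed
  qed (fact tau)
qed

end
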